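(* Consider the optimal clique cover delivery problem for a system with $K$ users and a given set $\mathcal{W}$ of subfiles to be delivered, and let $\mathscr{P}$ be the set of all cliques (feasible packets) that can be formed from $\mathcal{W}$. Run the following greedy algorithm with input $\mathcal{W}$ and $\mathscr{P}$: set $\mathscr{C}=\emptyset$, $\mathcal{E}=\mathcal{W}$, $\mathscr{S}=\mathscr{P}$; while $\mathcal{E}\neq\emptyset$: choose $\mathcal{P}^*\in\arg\max_{\mathcal{P}\in\mathscr{S}} |\mathcal{P}|/\|\mathcal{P}\|$ (ties broken arbitrarily), set $\mathscr{C}=\mathscr{C}\cup\{\mathcal{P}^*\}$, set $\mathcal{E}=\mathcal{E}\setminus\mathcal{P}^*$, and remove from $\mathscr{S}$ every $\mathcal{S}\in\mathscr{S}$ with $\mathcal{S}\cap\mathcal{P}^*\neq\emptyset$; output $\mathscr{C}$. Then this algorithm achieves a $(1+\log K)$-approximation to the optimal clique cover delivery problem, i.e., $\mathscr{C}$ is a set of cliques covering $\mathcal{W}$ and $\sum_{\mathcal{P}\in\mathscr{C}}\|\mathcal{P}\|\le(1+\log K)\cdot\mathrm{OPT}$, where $\mathrm{OPT}$ is the optimal value of the problem.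
   Context: Setting: a server and $K$ users, $[K]=\{1,\dots,K\}$; user $k$ requests file $W_k$. For $k\in[K]$ and $\mathcal{A}\subseteq[K]\setminus\{k\}$, $W_{k,\mathcal{A}}$ denotes the subfile of $W_k$ consisting of the bits cached exactly by the users in $\mathcal{A}$, and $\|W_{k,\mathcal{A}}\|$ is its size in bits (a nonnegative integer). The set of subfiles to be delivered is $\mathcal{W}=\{W_{k,\mathcal{A}}: k\in[K],\ \mathcal{A}\subseteq[K]\setminus\{k\},\ \|W_{k,\mathcal{A}}\|\neq 0\}$ (the sizes may be arbitrary). A clique (feasible packet) is a nonempty set $\mathcal{P}\subseteq\mathcal{W}$ of the form $\{W_{k,\mathcal{A}_k}: k\in\mathcal{M}\}$ for some $\mathcal{M}\subseteq[K]$ (at most one subfile per user) such that $k\in\mathcal{A}_{k'}$ for all distinct $k,k'\in\mathcal{M}$; equivalently, a clique of the side-information graph on vertex set $\mathcal{W}$ in which $W_{k,\mathcal{A}}$ and $W_{l,\mathcal{B}}$ ($k\neq l$) are adjacent iff $l\in\mathcal{A}$ and $k\in\mathcal{B}$. The size of a clique is $\|\mathcal{P}\|=\max_{W\in\mathcal{P}}\|W\|$, and $|\mathcal{P}|$ is its number of subfiles. The optimal clique cover delivery problem: choose a set of cliques whose union is $\mathcal{W}$ minimizing the sum of their sizes. *)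

theory Defs
  imports Complex_Main
begin

text \<open>A subfile W_{k,A} is represented by the pair (k, A) :: nat \<times> nat set.
  The sizes are given by an arbitrary function sz :: nat \<Rightarrow> nat set \<Rightarrow> nat
  (sz k A = number of bits of W_{k,A}).\<close>

type_synonym subfile = "nat \<times> nat set"

definition subfiles :: "nat \<Rightarrow> (nat \<Rightarrow> nat set \<Rightarrow> nat) \<Rightarrow> subfile set" where
  "subfiles K sz = {(k, A). k \<in> {1..K} \<and> A \<subseteq> {1..K} - {k} \<and> sz k A \<noteq> 0}"

definition is_clique :: "nat \<Rightarrow> (nat \<Rightarrow> nat set \<Rightarrow> nat) \<Rightarrow> subfile set \<Rightarrow> bool" where
  "is_clique K sz P \<longleftrightarrow> P \<noteq> {} \<and> P \<subseteq> subfiles K sz \<and>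
     (\<forall>(k, A) \<in> P. \<forall>(l, B) \<in> P. (k, A) \<noteq> (l, B) \<longrightarrow> k \<noteq> l \<and> l \<in> A \<and> k \<in> B)"

definition cliques :: "nat \<Rightarrow> (nat \<Rightarrow> nat set \<Rightarrow> nat) \<Rightarrow> subfile set set" where
  "cliques K sz = {P. is_clique K sz P}"

definition clique_size :: "(nat \<Rightarrow> nat set \<Rightarrow> nat) \<Rightarrow> subfile set \<Rightarrow> nat" where
  "clique_size sz P = Max ((\<lambda>(k, A). sz k A) ` P)"

definition cover_cost :: "(nat \<Rightarrow> nat set \<Rightarrow> nat) \<Rightarrow> subfile set set \<Rightarrow> nat" where
  "cover_cost sz C = (\<Sum>P\<in>C. clique_size sz P)"

definition is_clique_cover :: "nat \<Rightarrow> (nat \<Rightarrow> nat set \<Rightarrow> nat) \<Rightarrow> subfile set set \<Rightarrow> bool" where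
  "is_clique_cover K sz C \<longleftrightarrow> C \<subseteq> cliques K sz \<and> \<Union>C = subfiles K sz"

definition OPT :: "nat \<Rightarrow> (nat \<Rightarrow> nat set \<Rightarrow> nat) \<Rightarrow> nat" where
  "OPT K sz = Min {cover_cost sz C | C. is_clique_cover K sz C}"

text \<open>One iteration of the greedy algorithm on states (C, E, S)
  (chosen cliques, uncovered subfiles, remaining candidate cliques);
  ties in the argmax are broken arbitrarily (nondeterministic choice).\<close>
definition ratio :: "(nat \<Rightarrow> nat set \<Rightarrow> nat) \<Rightarrow> subfile set \<Rightarrow> real" where
  "ratio sz P = real (card P) / real (clique_size sz P)"

inductive greedy_step :: "(nat \<Rightarrow> nat set \<Rightarrow> nat)
    \<Rightarrow> subfile set set \<times> subfile set \<times> subfile set set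
    \<Rightarrow> subfile set set \<times> subfile set \<times> subfile set set \<Rightarrow> bool"
  for sz where
  "E \<noteq> {} \<Longrightarrow> P \<in> S \<Longrightarrow> (\<forall>Q\<in>S. ratio sz Q \<le> ratio sz P) \<Longrightarrow>
   greedy_step sz (C, E, S) (C \<union> {P}, E - P, {Q \<in> S. Q \<inter> P = {}})"

definition greedy_output :: "nat \<Rightarrow> (nat \<Rightarrow> nat set \<Rightarrow> nat) \<Rightarrow> subfile set set \<Rightarrow> bool" where
  "greedy_output K sz C \<longleftrightarrow> (\<exists>S. (greedy_step sz)\<^sup>*\<^sup>* ({}, subfiles K sz, cliques K sz) (C, {}, S))"

end

theory Submission
  imports Defs "HOL-Analysis.Harmonic_Numbers"
begin

lemma fin_subfiles: "finite (subfiles K sz)"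
proof -
  have "subfiles K sz \<subseteq> {1..K} \<times> Pow {1..K}" unfolding subfiles_def by auto
  thus ?thesis by (rule finite_subset) auto
qed

lemma clique_sub_W: "is_clique K sz P \<Longrightarrow> P \<subseteq> subfiles K sz"
  unfolding is_clique_def by auto

lemma clique_fin: "is_clique K sz P \<Longrightarrow> finite P"
  by (rule finite_subset[OF clique_sub_W fin_subfiles])

lemma finite_cliques: "finite (cliques K sz)"
proof -
  have "cliques K sz \<subseteq> Pow (subfiles K sz)" unfolding cliques_def using clique_sub_W by auto
  thus ?thesis using fin_subfiles by (rule finite_subset[OF _ finite_Pow_iff[THEN iffD2]])
qed

lemma cs_pos: assumes "is_clique K sz P" shows "clique_size sz P \<ge> 1"
proof -
  have fin: "finite P" and ne: "P \<noteq> {}" using assms clique_fin is_clique_def by auto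
  then obtain e where e: "e \<in> P" by auto
  obtain k A where eq: "e = (k, A)" by force
  have "(k,A) \<in> subfiles K sz" using clique_sub_W[OF assms] e eq by auto
  hence "sz k A \<noteq> 0" unfolding subfiles_def by auto
  moreover have "sz k A \<le> clique_size sz P" unfolding clique_size_def
    using fin e eq by (intro Max_ge) force+
  ultimately show ?thesis by linarith
qed

lemma cs_mono: "Q \<noteq> {} \<Longrightarrow> Q \<subseteq> P \<Longrightarrow> finite P \<Longrightarrow> clique_size sz Q \<le> clique_size sz P"
  unfolding clique_size_def by (intro Max_mono) auto

lemma is_clique_alt: "is_clique K sz P \<longleftrightarrow> P \<noteq> {} \<and> P \<subseteq> subfiles K sz \<and>
   (\<forall>x\<in>P. \<forall>y\<in>P. x \<noteq> y \<longrightarrow> fst x \<noteq> fst y \<and> fst y \<in> snd x \<and> fst x \<in> snd y)"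
  unfolding is_clique_def by (simp add: split_beta prod_eq_iff)

lemma clique_sub: assumes "is_clique K sz P" "Q \<subseteq> P" "Q \<noteq> {}" shows "is_clique K sz Q"
proof -
  have H: "\<forall>x\<in>P. \<forall>y\<in>P. x \<noteq> y \<longrightarrow> fst x \<noteq> fst y \<and> fst y \<in> snd x \<and> fst x \<in> snd y"
    and W: "P \<subseteq> subfiles K sz" using assms(1) unfolding is_clique_alt by auto
  have "\<forall>x\<in>Q. \<forall>y\<in>Q. x \<noteq> y \<longrightarrow> fst x \<noteq> fst y \<and> fst y \<in> snd x \<and> fst x \<in> snd y"
  proof (intro ballI impI)
    fix x y assume xQ: "x \<in> Q" and yQ: "y \<in> Q" and xy: "x \<noteq> y"
    have "x \<in> P" "y \<in> P" using assms(2) xQ yQ by (auto dest: subsetD)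
    thus "fst x \<noteq> fst y \<and> fst y \<in> snd x \<and> fst x \<in> snd y" using H xy by blast
  qed
  moreover have "Q \<subseteq> subfiles K sz" using W assms(2) by (rule order_trans[rotated])
  ultimately show ?thesis unfolding is_clique_alt using assms(3) by blast
qed

lemma clique_single: "e \<in> subfiles K sz \<Longrightarrow> is_clique K sz {e}"
  unfolding is_clique_alt by simp

lemma clique_card: assumes "is_clique K sz P" shows "card P \<le> K"
proof -
  have "inj_on fst P" using assms unfolding is_clique_def inj_on_def by fastforce
  hence "card P = card (fst ` P)" by (simp add: card_image)
  also have "fst ` P \<subseteq> {1..K}" using clique_sub_W[OF assms] unfolding subfiles_def by auto
  hence "card (fst ` P) \<le> card {1..K}" by (intro card_mono) auto
  finally show ?thesis by simp
qed

lemma harm_diff: "harm (b + d) - harm b \<ge> real d / real (b + d)"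
proof (induction d)
  case 0 then show ?case by simp
next
  case (Suc d)
  have "real d / real (b + d) \<ge> real d / real (b + Suc d)"
    by (cases "b + d = 0") (auto intro: divide_left_mono)
  moreover have "harm (b + Suc d) = harm (b + d) + 1 / real (b + Suc d)"
    by (simp add: harm_Suc inverse_eq_divide)
  moreover have "real d / real (b + Suc d) + 1 / real (b + Suc d) = real (Suc d) / real (b + Suc d)"
    by (simp add: add_divide_distrib[symmetric])
  ultimately show ?case using Suc by linarith
qed

lemma harm_diff2: "r \<le> m \<Longrightarrow> harm m - harm (m - r) \<ge> real r / real m"
proof -
  assume "r \<le> m"
  hence e: "m - r + r = m" by simp
  show ?thesis using harm_diff[of r "m - r"] unfolding e by simp
qed

lemma harm_le_ln: "harm K \<le> 1 + ln (real K)"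
proof (cases "K = 0")
  case True then show ?thesis by (simp add: harm_def)
next
  case False
  have "harm K - ln (real K) \<le> harm 1 - ln (real (1::nat))"
    using euler_mascheroni_sequence_decreasing[of 1 K] False by simp
  thus ?thesis by (simp add: harm_def)
qed

lemma cost_insert: "real (cover_cost sz (C \<union> {P})) \<le> real (cover_cost sz C) + real (clique_size sz P)"
proof (cases "finite C")
  case True then show ?thesis unfolding cover_cost_def by (simp add: sum.insert_if)
next
  case False then show ?thesis unfolding cover_cost_def by simp
qed

lemma term_bound:
  assumes P: "is_clique K sz P" and PE: "P \<subseteq> E"
    and S: "S = {Q \<in> cliques K sz. Q \<subseteq> E}" and PS: "P \<in> S"
    and max: "\<forall>Q\<in>S. ratio sz Q \<le> ratio sz P"
    and Q: "is_clique K sz Q"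
  shows "real (clique_size sz P) / real (card P) * real (card (Q \<inter> P))
     \<le> real (clique_size sz Q) * (harm (card (Q \<inter> E)) - harm (card (Q \<inter> (E - P))))"
proof -
  define m where "m = card (Q \<inter> E)"
  define r where "r = card (Q \<inter> P)"
  have finQ: "finite Q" using Q clique_fin by auto
  have rm: "r \<le> m" unfolding r_def m_def using finQ PE by (intro card_mono) auto
  have "Q \<inter> (E - P) = Q \<inter> E - Q \<inter> P" by blast
  hence "card (Q \<inter> (E - P)) = card (Q \<inter> E - Q \<inter> P)" by simp
  also have "\<dots> = m - r" unfolding m_def r_def using finQ PE
    by (subst card_Diff_subset) auto
  finally have cd: "card (Q \<inter> (E - P)) = m - r" .
  have hd: "harm m - harm (m - r) \<ge> real r / real m" using harm_diff2[OF rm] .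
  show ?thesis
  proof (cases "r = 0")
    case True
    hence "card (Q \<inter> P) = 0" using r_def by simp
    then show ?thesis using cd True by (simp add: m_def)
  next
    case False
    hence ne: "Q \<inter> E \<noteq> {}" using rm m_def by auto
    hence QEc: "is_clique K sz (Q \<inter> E)" using clique_sub[OF Q] by auto
    hence "Q \<inter> E \<in> S" using S unfolding cliques_def by auto
    hence rat: "ratio sz (Q \<inter> E) \<le> ratio sz P" using max by auto
    have c1: "clique_size sz (Q \<inter> E) \<ge> 1" using cs_pos[OF QEc] .
    have c2: "clique_size sz P \<ge> 1" using cs_pos[OF P] .
    have c3: "clique_size sz (Q \<inter> E) \<le> clique_size sz Q" using cs_mono[OF ne _ finQ] by auto
    have mpos: "m > 0" using rm False by auto
    have cp: "card P > 0" using P clique_fin is_clique_def by (simp add: card_gt_0_iff)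
    from rat have "real m / real (clique_size sz (Q \<inter> E)) \<le> real (card P) / real (clique_size sz P)"
      unfolding ratio_def m_def .
    hence "real m * real (clique_size sz P) \<le> real (card P) * real (clique_size sz (Q \<inter> E))"
      using c1 c2 by (simp add: divide_simps)
    also have "\<dots> \<le> real (card P) * real (clique_size sz Q)" using c3 by (simp add: mult_left_mono)
    finally have key: "real (clique_size sz P) / real (card P) \<le> real (clique_size sz Q) / real m"
      using mpos cp by (simp add: divide_simps mult.commute)
    have "real (clique_size sz P) / real (card P) * real r \<le> real (clique_size sz Q) / real m * real r"
      using key by (intro mult_right_mono) auto
    also have "\<dots> = real (clique_size sz Q) * (real r / real m)" by simp
    also have "\<dots> \<le> real (clique_size sz Q) * (harm m - harm (m - r))"
      using hd by (intro mult_left_mono) auto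
    finally show ?thesis using cd by (simp add: m_def r_def)
  qed
qed

lemma cost_bound:
  assumes "(greedy_step sz)\<^sup>*\<^sup>* s t" "fst (snd t) = {}"
  shows "\<forall>C E S. s = (C, E, S) \<longrightarrow> S = {Q \<in> cliques K sz. Q \<subseteq> E} \<longrightarrow>
     (\<forall>F. finite F \<longrightarrow> F \<subseteq> cliques K sz \<longrightarrow> E \<subseteq> \<Union>F \<longrightarrow>
        real (cover_cost sz (fst t)) \<le> real (cover_cost sz C) +
           (\<Sum>Q\<in>F. real (clique_size sz Q) * harm (card (Q \<inter> E))))"
  using assms(1)
proof (induction rule: converse_rtranclp_induct)
  case base
  show ?case
  proof (intro allI impI)
    fix C E S F
    assume t: "t = (C, E, S)"
    hence "E = {}" using assms(2) by simp
    thus "real (cover_cost sz (fst t)) \<le> real (cover_cost sz C) +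
           (\<Sum>Q\<in>F. real (clique_size sz Q) * harm (card (Q \<inter> E)))" using t by (simp add: harm_def)
  qed
next
  case (step y z)
  show ?case
  proof (intro allI impI)
    fix C E S F
    assume y: "y = (C, E, S)" and S: "S = {Q \<in> cliques K sz. Q \<subseteq> E}"
      and F: "finite F" "F \<subseteq> cliques K sz" "E \<subseteq> \<Union>F"
    from step(1) y obtain P where z: "z = (C \<union> {P}, E - P, {Q \<in> S. Q \<inter> P = {}})"
      and PS: "P \<in> S" and max: "\<forall>Q\<in>S. ratio sz Q \<le> ratio sz P"
      by (auto elim: greedy_step.cases)
    have Pc: "is_clique K sz P" and PE: "P \<subseteq> E" using PS S unfolding cliques_def by auto
    have S': "{Q \<in> S. Q \<inter> P = {}} = {Q \<in> cliques K sz. Q \<subseteq> E - P}"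
      using S PE by auto
    have IH: "real (cover_cost sz (fst t)) \<le> real (cover_cost sz (C \<union> {P})) +
           (\<Sum>Q\<in>F. real (clique_size sz Q) * harm (card (Q \<inter> (E - P))))"
      using step(3)[rule_format, OF z S' F(1) F(2)] F(3) by blast
    have cp: "card P > 0" using Pc clique_fin is_clique_def by (simp add: card_gt_0_iff)
    have "card P = card (\<Union>Q\<in>F. Q \<inter> P)"
      using PE F(3) by (intro arg_cong[where f=card]) auto
    also have "\<dots> \<le> (\<Sum>Q\<in>F. card (Q \<inter> P))" using F(1) by (rule card_UN_le)
    finally have sumc: "real (card P) \<le> (\<Sum>Q\<in>F. real (card (Q \<inter> P)))"
      by (metis of_nat_le_iff of_nat_sum)
    have "real (clique_size sz P) = real (clique_size sz P) / real (card P) * real (card P)"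
      using cp by simp
    also have "\<dots> \<le> real (clique_size sz P) / real (card P) * (\<Sum>Q\<in>F. real (card (Q \<inter> P)))"
      using sumc by (intro mult_left_mono) auto
    also have "\<dots> = (\<Sum>Q\<in>F. real (clique_size sz P) / real (card P) * real (card (Q \<inter> P)))"
      by (simp add: sum_distrib_left)
    also have "\<dots> \<le> (\<Sum>Q\<in>F. real (clique_size sz Q) * (harm (card (Q \<inter> E)) - harm (card (Q \<inter> (E - P)))))"
      using F(2) by (intro sum_mono term_bound[OF Pc PE S PS max]) (auto simp: cliques_def)
    finally have "real (clique_size sz P) +
        (\<Sum>Q\<in>F. real (clique_size sz Q) * harm (card (Q \<inter> (E - P))))
       \<le> (\<Sum>Q\<in>F. real (clique_size sz Q) * harm (card (Q \<inter> E)))"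
      by (simp add: right_diff_distrib sum_subtractf)
    thus "real (cover_cost sz (fst t)) \<le> real (cover_cost sz C) +
           (\<Sum>Q\<in>F. real (clique_size sz Q) * harm (card (Q \<inter> E)))"
      using IH cost_insert[of sz C P] by linarith
  qed
qed

lemma invariant:
  assumes "(greedy_step sz)\<^sup>*\<^sup>* ({}, subfiles K sz, cliques K sz) s"
  shows "case s of (C, E, S) \<Rightarrow> C \<subseteq> cliques K sz \<and> \<Union>C \<union> E = subfiles K sz \<and>
     S = {Q \<in> cliques K sz. Q \<subseteq> E} \<and> E \<subseteq> subfiles K sz"
  using assms
proof (induction rule: rtranclp_induct)
  case base
  then show ?case using clique_sub_W by (auto simp: cliques_def)
next
  case (step y z)
  obtain C E S where y: "y = (C, E, S)" by (cases y) auto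
  from step(2) y obtain P where z: "z = (C \<union> {P}, E - P, {Q \<in> S. Q \<inter> P = {}})"
    and PS: "P \<in> S" by (auto elim: greedy_step.cases)
  from step(3) y have I: "C \<subseteq> cliques K sz" "\<Union>C \<union> E = subfiles K sz"
     "S = {Q \<in> cliques K sz. Q \<subseteq> E}" "E \<subseteq> subfiles K sz" by auto
  have Pc: "P \<in> cliques K sz" "P \<subseteq> E" using PS I(3) by auto
  have 1: "C \<union> {P} \<subseteq> cliques K sz" using Pc I(1) by blast
  have 2: "\<Union>(C \<union> {P}) \<union> (E - P) = subfiles K sz" using Pc(2) I(2) by blast
  have 3: "{Q \<in> S. Q \<inter> P = {}} = {Q \<in> cliques K sz. Q \<subseteq> E - P}" using I(3) Pc(2) by blast
  have 4: "E - P \<subseteq> subfiles K sz" using I(4) by blast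
  show ?case unfolding z using 1 2 3 4 by simp
qed

lemma existence:
  assumes "finite E"
  shows "E \<subseteq> subfiles K sz \<Longrightarrow> S = {Q \<in> cliques K sz. Q \<subseteq> E} \<Longrightarrow>
     \<exists>C' S'. (greedy_step sz)\<^sup>*\<^sup>* (C, E, S) (C', {}, S')"
  using assms
proof (induction E arbitrary: C S rule: finite_psubset_induct)
  case (psubset E)
  show ?case
  proof (cases "E = {}")
    case True then show ?thesis by blast
  next
    case False
    then obtain e where e: "e \<in> E" by auto
    hence "{e} \<in> S" using psubset.prems clique_single[of e K sz] by (auto simp: cliques_def)
    hence Sne: "S \<noteq> {}" by auto
    have Sfin: "finite S" using psubset.prems(2) finite_cliques[of K sz] by auto
    have "Max (ratio sz ` S) \<in> ratio sz ` S" using Sne Sfin by (intro Max_in) auto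
    then obtain P where PS: "P \<in> S" and PM: "ratio sz P = Max (ratio sz ` S)" by auto
    have max: "\<forall>Q\<in>S. ratio sz Q \<le> ratio sz P" using PM Sfin by auto
    have st: "greedy_step sz (C, E, S) (C \<union> {P}, E - P, {Q \<in> S. Q \<inter> P = {}})"
      using False PS max by (rule greedy_step.intros)
    have Pc: "is_clique K sz P" "P \<subseteq> E" using PS psubset.prems(2) by (auto simp: cliques_def)
    hence "P \<noteq> {}" by (simp add: is_clique_def)
    hence psub: "E - P \<subset> E" using Pc(2) by auto
    have Wsub: "E - P \<subseteq> subfiles K sz" using psubset.prems(1) by auto
    have Seq: "{Q \<in> S. Q \<inter> P = {}} = {Q \<in> cliques K sz. Q \<subseteq> E - P}" using psubset.prems(2) Pc by auto
    obtain C' S' where "(greedy_step sz)\<^sup>*\<^sup>* (C \<union> {P}, E - P, {Q \<in> S. Q \<inter> P = {}}) (C', {}, S')"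
      using psubset.IH[OF psub Wsub Seq] by blast
    then show ?thesis using st by (meson converse_rtranclp_into_rtranclp)
  qed
qed

theorem lemma1:
  fixes K :: nat and sz :: "nat \<Rightarrow> nat set \<Rightarrow> nat"
  shows "(\<exists>C. greedy_output K sz C) \<and>
         (\<forall>C. greedy_output K sz C \<longrightarrow>
            is_clique_cover K sz C \<and>
            real (cover_cost sz C) \<le> (1 + ln (real K)) * real (OPT K sz))"
proof (intro conjI allI impI)
  have "cliques K sz = {Q \<in> cliques K sz. Q \<subseteq> subfiles K sz}"
    using clique_sub_W by (auto simp: cliques_def)
  note ex = existence[OF fin_subfiles[of K sz] order_refl this, where C="{}"]
  then show "\<exists>C. greedy_output K sz C"
    unfolding greedy_output_def by blast
next
  fix C assume "greedy_output K sz C"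
  then obtain S where run: "(greedy_step sz)\<^sup>*\<^sup>* ({}, subfiles K sz, cliques K sz) (C, {}, S)"
    unfolding greedy_output_def by auto
  from invariant[OF run] show cov: "is_clique_cover K sz C" unfolding is_clique_cover_def by auto
  define costs where "costs = {cover_cost sz C | C. is_clique_cover K sz C}"
  have "costs \<subseteq> cover_cost sz ` Pow (cliques K sz)" unfolding costs_def is_clique_cover_def by auto
  hence cfin: "finite costs" using finite_cliques by (rule finite_subset[OF _ finite_imageI[OF finite_Pow_iff[THEN iffD2]]])
  have "OPT K sz \<in> costs" unfolding OPT_def costs_def[symmetric]
    using cfin cov costs_def by (intro Min_in) auto
  then obtain F where Fc: "is_clique_cover K sz F" and Fo: "cover_cost sz F = OPT K sz"
    unfolding costs_def by auto
  have Fsub: "F \<subseteq> cliques K sz" and FU: "\<Union>F = subfiles K sz" using Fc unfolding is_clique_cover_def by auto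
  have Ffin: "finite F" using Fsub finite_cliques by (rule finite_subset)
  have ceq: "cliques K sz = {Q \<in> cliques K sz. Q \<subseteq> subfiles K sz}"
    using clique_sub_W by (auto simp: cliques_def)
  have "real (cover_cost sz C) \<le> real (cover_cost sz {}) +
           (\<Sum>Q\<in>F. real (clique_size sz Q) * harm (card (Q \<inter> subfiles K sz)))"
  proof -
    have e0: "fst (snd (C, {}::subfile set, S)) = {}" by simp
    have "subfiles K sz \<subseteq> \<Union>F" using FU by simp
    from cost_bound[OF run e0, rule_format, OF refl ceq Ffin Fsub this]
    show ?thesis by simp
  qed
  also have "\<dots> \<le> (\<Sum>Q\<in>F. real (clique_size sz Q) * (1 + ln (real K)))"
  proof -
    have "real (clique_size sz Q) * harm (card (Q \<inter> subfiles K sz)) \<le> real (clique_size sz Q) * (1 + ln (real K))"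
      if "Q \<in> F" for Q
    proof -
      have Qc: "is_clique K sz Q" using that Fsub by (auto simp: cliques_def)
      have "card (Q \<inter> subfiles K sz) \<le> K" using clique_card[OF Qc] clique_sub_W[OF Qc]
        by (simp add: Int_absorb2)
      hence "harm (card (Q \<inter> subfiles K sz)) \<le> (harm K :: real)" by (rule harm_mono)
      also have "\<dots> \<le> 1 + ln (real K)" by (rule harm_le_ln)
      finally show ?thesis by (simp add: mult_left_mono)
    qed
    thus ?thesis by (simp add: cover_cost_def sum_mono)
  qed
  also have "\<dots> = (1 + ln (real K)) * real (OPT K sz)"
  proof -
    have "(\<Sum>Q\<in>F. real (clique_size sz Q) * (1 + ln (real K))) = real (\<Sum>Q\<in>F. clique_size sz Q) * (1 + ln (real K))"
      by (simp add: sum_distrib_right)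
    thus ?thesis using Fo unfolding cover_cost_def by simp
  qed
  finally show "real (cover_cost sz C) \<le> (1 + ln (real K)) * real (OPT K sz)" .
qed

end
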